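(* Let $G$ be a finite ordered graph and let $k$ be the largest integer such that $G$ contains the ordered matching $M_k$ as an (not necessarily induced) ordered subgraph, i.e. there are vertices $a_1<_G b_1<_G a_2<_G b_2<_G\dots<_G a_k<_G b_k$ with $\{a_i,b_i\}\in E(G)$ for all $i$. Then $\chi(G)\le 2k+1$.
   Context: An ordered graph is a triple $G=(V,E,\le_G)$ where $(V,E)$ is a finite simple undirected graph and $\le_G$ is a linear order on $V$. The ordered matching $M_k$ has vertices $a_1<b_1<\dots<a_k<b_k$ and edges $\{a_i,b_i\}$. The ordered chromatic number $\chi(G)$ is the minimum number of sets in a partition of $V$ into sets that are consecutive in $\le_G$ and span no edge of $G$. *)

theory Defs
  imports Main "HOL-Library.Disjoint_Sets"
begin

text \<open>An ordered graph: a finite vertex set V of a linearly ordered type (the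
  vertex order is the restriction of the type's order to V) together with a set
  E of edges, each edge a 2-element subset of V.\<close>
definition ordered_graph :: "('a::linorder) set \<Rightarrow> 'a set set \<Rightarrow> bool" where
  "ordered_graph V E \<longleftrightarrow> finite V \<and>
     (\<forall>e\<in>E. \<exists>u v. u \<in> V \<and> v \<in> V \<and> u \<noteq> v \<and> e = {u, v})"

definition contains_matching :: "('a::linorder) set \<Rightarrow> 'a set set \<Rightarrow> nat \<Rightarrow> bool" where
  "contains_matching V E k \<longleftrightarrow>
     (\<exists>a b :: nat \<Rightarrow> 'a.
        (\<forall>i<k. a i \<in> V \<and> b i \<in> V \<and> a i < b i \<and> {a i, b i} \<in> E) \<and>
        (\<forall>i. Suc i < k \<longrightarrow> b i < a (Suc i)))"

definition consecutive :: "('a::linorder) set \<Rightarrow> 'a set \<Rightarrow> bool" where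
  "consecutive V S \<longleftrightarrow> (\<forall>x\<in>S. \<forall>y\<in>S. \<forall>z\<in>V. x \<le> z \<and> z \<le> y \<longrightarrow> z \<in> S)"

definition spans_no_edge :: "'a set set \<Rightarrow> 'a set \<Rightarrow> bool" where
  "spans_no_edge E S \<longleftrightarrow> (\<forall>e\<in>E. \<not> e \<subseteq> S)"

definition ordered_chromatic_number :: "('a::linorder) set \<Rightarrow> 'a set set \<Rightarrow> nat" where
  "ordered_chromatic_number V E =
     (LEAST m. \<exists>P. partition_on V P \<and> finite P \<and> card P = m \<and>
        (\<forall>S\<in>P. consecutive V S \<and> spans_no_edge E S))"

end

theory Submission
  imports Defs
begin

definition good :: "('a::linorder) set \<Rightarrow> 'a set set \<Rightarrow> 'a set \<Rightarrow> nat \<Rightarrow> bool" where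
  "good V E W m \<longleftrightarrow> (\<exists>P. partition_on W P \<and> finite P \<and> card P \<le> m \<and>
        (\<forall>S\<in>P. consecutive V S \<and> spans_no_edge E S))"

lemma no_edge_good:
  fixes V :: "('a::linorder) set" and E :: "'a set set"
  assumes up: "\<forall>x\<in>W. \<forall>y\<in>V. x \<le> y \<longrightarrow> y \<in> W" and ne: "\<forall>e\<in>E. \<not> e \<subseteq> W"
  shows "good V E W 1"
proof (cases "W = {}")
  case True
  then show ?thesis unfolding good_def by (intro exI[of _ "{}"]) (auto simp: partition_on_empty)
next
  case False
  show ?thesis unfolding good_def
    apply (intro exI[of _ "{W}"])
    using False up ne by (auto simp: partition_on_space consecutive_def spans_no_edge_def)
qed

lemma edge_form:
  assumes "ordered_graph V E" "f \<in> E"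
  shows "\<exists>u v. u \<in> V \<and> v \<in> V \<and> u \<noteq> v \<and> f = {u,v}"
proof -
  have "\<forall>e\<in>E. \<exists>u v. u \<in> V \<and> v \<in> V \<and> u \<noteq> v \<and> e = {u, v}"
    using assms(1) unfolding ordered_graph_def by (rule conjunct2)
  then show ?thesis using assms(2) by (rule bspec)
qed

lemma edge_step:
  fixes V :: "('a::linorder) set" and E :: "'a set set"
  assumes og: "ordered_graph V E" and WV: "W \<subseteq> V" and e: "e \<in> E" "e \<subseteq> W"
  shows "\<exists>b x0. x0 \<in> W \<and> x0 < b \<and> b \<in> W \<and> {x0, b} \<in> E \<and> spans_no_edge E {v\<in>W. v < b}"
proof -
  define R where "R = {y\<in>W. \<exists>x\<in>W. x < y \<and> {x,y} \<in> E}"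
  have finW: "finite W" using og WV unfolding ordered_graph_def by (auto intro: finite_subset)
  have edge: "\<exists>u v. u \<in> V \<and> v \<in> V \<and> u < v \<and> f = {u, v}" if fE: "f \<in> E" for f
  proof -
    obtain u v where "u \<in> V" "v \<in> V" "u \<noteq> v" "f = {u,v}" using edge_form[OF og fE] by blast
    from \<open>u \<noteq> v\<close> have "u < v \<or> v < u" by auto
    then show ?thesis
    proof
      assume "u < v" then show ?thesis using \<open>u \<in> V\<close> \<open>v \<in> V\<close> \<open>f = {u,v}\<close> by blast
    next
      assume "v < u" moreover have "f = {v,u}" using \<open>f = {u,v}\<close> by (simp add: insert_commute)
      ultimately show ?thesis using \<open>u \<in> V\<close> \<open>v \<in> V\<close> by blast
    qed
  qed
  obtain u v where uv: "u < v" "e = {u,v}" using edge[OF e(1)] by blast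
  have "v \<in> R" unfolding R_def using uv e by auto
  then have Rne: "R \<noteq> {}" by blast
  have finR: "finite R" using finW unfolding R_def by auto
  define b where "b = Min R"
  have "b \<in> R" unfolding b_def using Rne finR by simp
  then obtain x0 where x0: "x0 \<in> W" "x0 < b" "{x0,b} \<in> E" "b \<in> W" unfolding R_def by blast
  have "spans_no_edge E {v\<in>W. v < b}"
    unfolding spans_no_edge_def
  proof
    fix f assume f: "f \<in> E"
    show "\<not> f \<subseteq> {v\<in>W. v < b}"
    proof
      assume sub: "f \<subseteq> {v\<in>W. v < b}"
      obtain p q where pq: "p < q" "f = {p,q}" using edge[OF f] by blast
      have "q \<in> R" unfolding R_def using pq sub f by auto
      then have "b \<le> q" unfolding b_def using finR by simp
      moreover have "q < b" using sub pq by auto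
      ultimately show False by simp
    qed
  qed
  then show ?thesis using x0 by (intro exI[of _ b] exI[of _ x0]) simp
qed

lemma main_lemma:
  fixes V :: "('a::linorder) set" and E :: "'a set set"
  assumes og: "ordered_graph V E"
  shows "\<forall>W. W \<subseteq> V \<longrightarrow> (\<forall>x\<in>W. \<forall>y\<in>V. x \<le> y \<longrightarrow> y \<in> W) \<longrightarrow>
      \<not> contains_matching W E (Suc k) \<longrightarrow> good V E W (2*k+1)"
proof (induction k)
  case 0
  show ?case
  proof (intro allI impI)
    fix W assume WV: "W \<subseteq> V" and up: "\<forall>x\<in>W. \<forall>y\<in>V. x \<le> y \<longrightarrow> y \<in> W"
      and nm: "\<not> contains_matching W E (Suc 0)"
    have "\<forall>e\<in>E. \<not> e \<subseteq> W"
    proof (intro ballI notI)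
      fix e assume "e \<in> E" "e \<subseteq> W"
      then obtain b x0 where "x0 \<in> W \<and> x0 < b \<and> b \<in> W \<and> {x0, b} \<in> E"
        using edge_step[OF og WV] by blast
      then have "contains_matching W E (Suc 0)" unfolding contains_matching_def
        by (intro exI[of _ "\<lambda>_. x0"] exI[of _ "\<lambda>_. b"]) auto
      then show False using nm by simp
    qed
    then show "good V E W (2*0+1)" using no_edge_good[OF up] by simp
  qed
next
  case (Suc k)
  show ?case
  proof (intro allI impI)
    fix W assume WV: "W \<subseteq> V" and up: "\<forall>x\<in>W. \<forall>y\<in>V. x \<le> y \<longrightarrow> y \<in> W"
      and nm: "\<not> contains_matching W E (Suc (Suc k))"
    show "good V E W (2*Suc k+1)"
    proof (cases "\<forall>e\<in>E. \<not> e \<subseteq> W")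
      case True
      then have "good V E W 1" using no_edge_good[OF up] by simp
      then show ?thesis unfolding good_def by force
    next
      case False
      then obtain e where "e \<in> E" "e \<subseteq> W" by blast
      then obtain b x0 where bx: "x0 \<in> W" "x0 < b" "b \<in> W" "{x0, b} \<in> E"
        and A: "spans_no_edge E {v\<in>W. v < b}"
        using edge_step[OF og WV] by blast
      define W' where "W' = {v\<in>W. b < v}"
      have W'V: "W' \<subseteq> V" using WV unfolding W'_def by auto
      have up': "\<forall>x\<in>W'. \<forall>y\<in>V. x \<le> y \<longrightarrow> y \<in> W'" using up unfolding W'_def by force
      have nm': "\<not> contains_matching W' E (Suc k)"
      proof
        assume "contains_matching W' E (Suc k)"
        then obtain a c where ac: "\<forall>i<Suc k. a i \<in> W' \<and> c i \<in> W' \<and> a i < c i \<and> {a i, c i} \<in> E"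
          "\<forall>i. Suc i < Suc k \<longrightarrow> c i < a (Suc i)" unfolding contains_matching_def by blast
        define a' where "a' = (\<lambda>i. if i = 0 then x0 else a (i - 1))"
        define c' where "c' = (\<lambda>i. if i = 0 then b else c (i - 1))"
        have "contains_matching W E (Suc (Suc k))" unfolding contains_matching_def
        proof (rule exI[of _ a'], rule exI[of _ c'], rule conjI; intro allI impI)
          fix i assume i: "i < Suc (Suc k)"
          show "a' i \<in> W \<and> c' i \<in> W \<and> a' i < c' i \<and> {a' i, c' i} \<in> E"
          proof (cases i)
            case 0 then show ?thesis using bx by (simp add: a'_def c'_def)
          next
            case (Suc j) then show ?thesis using i ac(1)[rule_format, of j]
              by (auto simp: a'_def c'_def W'_def)
          qed
        next
          fix i assume i: "Suc i < Suc (Suc k)"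
          show "c' i < a' (Suc i)"
          proof (cases i)
            case 0 then show ?thesis using ac(1)[rule_format, of 0]
              by (simp add: a'_def c'_def W'_def)
          next
            case (Suc j) then show ?thesis using i ac(2)[rule_format, of j]
              by (auto simp: a'_def c'_def)
          qed
        qed
        then show False using nm by simp
      qed
      have g: "good V E W' (2*k+1)"
        by (rule Suc.IH[THEN spec, THEN mp, THEN mp, THEN mp]) (fact W'V up' nm')+
      then obtain P' where P': "partition_on W' P'" "finite P'" "card P' \<le> 2*k+1"
        "\<forall>S\<in>P'. consecutive V S \<and> spans_no_edge E S"
        unfolding good_def by auto
      define A where "A = {v\<in>W. v < b}"
      define P1 where "P1 = insert {b} P'"
      have d1: "disjnt {b} (\<Union>P')" using P'(1) partition_onD1[OF P'(1)] unfolding W'_def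
        by (auto simp: disjnt_def)
      have "{v\<in>W. b \<le> v} - {b} = W'" unfolding W'_def by auto
      then have part1: "partition_on {v\<in>W. b \<le> v} P1" unfolding P1_def
        using partition_on_insert[OF d1] P'(1) bx by auto
      have cons1: "\<forall>S\<in>P1. consecutive V S \<and> spans_no_edge E S"
      proof -
        have "spans_no_edge E {b}"
          unfolding spans_no_edge_def
        proof (intro ballI notI)
          fix f assume "f \<in> E" "f \<subseteq> {b}"
          then obtain u v where "u \<noteq> v" "f = {u,v}" using edge_form[OF og] by blast
          then have "u = b" "v = b" using \<open>f \<subseteq> {b}\<close> by auto
          then show False using \<open>u \<noteq> v\<close> by simp
        qed
        moreover have "consecutive V {b}" unfolding consecutive_def by auto
        ultimately show ?thesis using P'(4) unfolding P1_def by auto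
      qed
      have finP1: "finite P1" unfolding P1_def using P'(2) by simp
      have "card P1 \<le> Suc (card P')" unfolding P1_def using P'(2) by (simp add: card_insert_if)
      then have cardP1: "card P1 \<le> 2*k+2" using P'(3) by linarith
      have U1: "\<Union>P1 = {v\<in>W. b \<le> v}" using partition_onD1[OF part1] by simp
      show ?thesis
      proof (cases "A = {}")
        case True
        then have "W = {v\<in>W. b \<le> v}" unfolding A_def by force
        then have "partition_on W P1" using part1 by simp
        moreover have "card P1 \<le> 2 * Suc k + 1" using cardP1 by simp
        ultimately show ?thesis unfolding good_def using cons1 finP1 by blast
      next
        case False
        have d2: "disjnt A (\<Union>P1)" unfolding U1 A_def disjnt_def by auto
        have WA: "W - A = {v\<in>W. b \<le> v}" unfolding A_def by auto
        have part: "partition_on W (insert A P1)"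
          unfolding partition_on_insert[OF d2] WA using part1 False by (simp add: A_def)
        have consA: "consecutive V A" unfolding consecutive_def A_def using up by force
        have "card (insert A P1) \<le> Suc (card P1)" using finP1 by (simp add: card_insert_if)
        then have cA: "card (insert A P1) \<le> 2 * Suc k + 1" using cardP1 by simp
        have "\<forall>S\<in>insert A P1. consecutive V S \<and> spans_no_edge E S"
          using cons1 consA A unfolding A_def by blast
        then show ?thesis unfolding good_def using part finP1 cA by blast
      qed
    qed
  qed
qed

theorem theorem2:
  fixes V :: "('a::linorder) set" and E :: "'a set set" and k :: nat
  assumes "ordered_graph V E"
    and "contains_matching V E k"
    and "\<forall>k'. contains_matching V E k' \<longrightarrow> k' \<le> k"
  shows "ordered_chromatic_number V E \<le> 2 * k + 1"
proof -
  have "\<not> contains_matching V E (Suc k)" using assms(3) by fastforce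
  then have "good V E V (2*k+1)" using main_lemma[OF assms(1), of k] by blast
  then obtain P where P: "partition_on V P" "finite P" "card P \<le> 2*k+1"
     "\<forall>S\<in>P. consecutive V S \<and> spans_no_edge E S" unfolding good_def by blast
  have "ordered_chromatic_number V E \<le> card P"
    unfolding ordered_chromatic_number_def
    by (rule Least_le) (use P in blast)
  then show ?thesis using P(3) by linarith
qed

end
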